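(* Let $G=(V,E)$ be an undirected graph without self-loops, let $u\ne v$ be vertices with $u$ dominating $v$, and let $\vec z=(z_1,\dots,z_N)$ be a list of all vertices of $V$ in which $v$ occurs before $u$. Let $O_{\mathrm{lex}}(\vec a,\vec b)$ be the constraint $\sum_{i=1}^N 2^{N-i}(b_i-a_i)\ge0$, let $\omega$ swap $u$ and $v$, and let $C$ be $u+\bar v\ge1$. Then for every set $\mathcal D$ of PB constraints and every $k\in\mathbb Z\cup\{\infty\}$: $$F_G\cup\mathcal D\cup\{f\le k-1\}\cup\{\neg C\}\vdash F_G|_\omega\cup O_{\mathrm{lex}}(\vec z|_\omega,\vec z)\cup\{f|_\omega\le f\},$$ $$F_G\cup\mathcal D\cup\{f\le k-1\}\cup\{\neg C\}\cup O_{\mathrm{lex}}(\vec z,\vec z|_\omega)\vdash 0\ge1,$$ i.e. the dominance-based strengthening conditions hold for deriving $u+\bar v\ge1$ with witness $\omega$ from any configuration with core set $F_G$, derived set $\mathcal D$, preorder $(O_{\mathrm{lex}},\vec z)$ and bound $k$.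
   Context: Each vertex $w\in V$ is identified with a Boolean variable. $F_G$ is the PB formula consisting of $\bar a+\bar b\ge1$ for all distinct non-adjacent $a,b\in V$; the objective is $f=\sum_{w\in V}\bar w$. $N(w)=\{w':(w,w')\in E\}$; for distinct $a,b$, $a$ dominates $b$ if $N(a)\setminus\{b\}\supseteq N(b)\setminus\{a\}$. A literal is a variable or its negation $\bar x=1-x$; a PB constraint is $\sum_i a_i\ell_i\ge A$ with negation $\sum_i-a_i\ell_i\ge -A+1$. For a substitution $\omega$, $C|_\omega$ replaces each literal by its image, and $G|_\omega$, $f|_\omega$ likewise. $O(\vec z|_\alpha,\vec z|_\beta)$ is $O(\vec a,\vec b)$ with $a_i$ replaced by $\alpha(z_i)$ and $b_i$ by $\beta(z_i)$ (by $z_i$ itself when no substitution is indicated). $\vdash$ denotes cutting planes derivability (axioms, literal axioms $\ell\ge0$, positive integer linear combinations, division with rounding up), extended so that $H\vdash D$ whenever $0\ge1$ is derivable from $H\cup\{\neg D\}$. $f\le\infty-1$ is the trivially true constraint. *)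

theory Defs
  imports Main "HOL-Library.Multiset"
begin

datatype 'v lit = Pos 'v | Neg 'v

fun lit_neg :: "'v lit \<Rightarrow> 'v lit" where
  "lit_neg (Pos x) = Neg x"
| "lit_neg (Neg x) = Pos x"

text \<open>A PB constraint \<open>\<Sum>i a_i l_i \<ge> A\<close>: a finite multiset of (coefficient, literal)
  terms together with the degree \<open>A\<close>.\<close>
type_synonym 'v pbc = "(int \<times> 'v lit) multiset \<times> int"

definition pbc_neg :: "'v pbc \<Rightarrow> 'v pbc" where
  "pbc_neg C = (image_mset (\<lambda>(a, l). (- a, l)) (fst C), - snd C + 1)"

fun lit_subst :: "('v \<Rightarrow> 'v lit) \<Rightarrow> 'v lit \<Rightarrow> 'v lit" where
  "lit_subst \<omega> (Pos x) = \<omega> x"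
| "lit_subst \<omega> (Neg x) = lit_neg (\<omega> x)"

definition terms_subst :: "('v \<Rightarrow> 'v lit) \<Rightarrow> (int \<times> 'v lit) multiset \<Rightarrow> (int \<times> 'v lit) multiset" where
  "terms_subst \<omega> T = image_mset (\<lambda>(a, l). (a, lit_subst \<omega> l)) T"

definition pbc_subst :: "('v \<Rightarrow> 'v lit) \<Rightarrow> 'v pbc \<Rightarrow> 'v pbc" where
  "pbc_subst \<omega> C = (terms_subst \<omega> (fst C), snd C)"

definition terms_neg :: "(int \<times> 'v lit) multiset \<Rightarrow> (int \<times> 'v lit) multiset" where
  "terms_neg T = image_mset (\<lambda>(a, l). (- a, l)) T"

text \<open>Canonical (normalised) form of a constraint: writing \<open>x\<bar> = 1 - x\<close>, the constraint
  \<open>\<Sum> a_i l_i \<ge> A\<close> is the linear inequality \<open>\<Sum>x c(x) x \<ge> d\<close>.  Cutting-planes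
  reasoning is carried out on these canonical forms (so that e.g. \<open>x + x\<bar>\<close> simplifies to 1).\<close>

fun term_coef :: "'v \<Rightarrow> int \<times> 'v lit \<Rightarrow> int" where
  "term_coef x (a, Pos y) = (if y = x then a else 0)"
| "term_coef x (a, Neg y) = (if y = x then - a else 0)"

fun term_const :: "int \<times> 'v lit \<Rightarrow> int" where
  "term_const (a, Pos y) = 0"
| "term_const (a, Neg y) = a"

definition canon :: "'v pbc \<Rightarrow> ('v \<Rightarrow> int) \<times> int" where
  "canon C = ((\<lambda>x. sum_mset (image_mset (term_coef x) (fst C))),
              snd C - sum_mset (image_mset term_const (fst C)))"

definition cdiv :: "int \<Rightarrow> int \<Rightarrow> int" where
  "cdiv a m = - ((- a) div m)"

text \<open>Division with rounding up, performed on the normalised literal form: a variable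
  with negative coefficient \<open>c\<close> is read as literal \<open>x\<bar>\<close> with coefficient \<open>-c\<close>.\<close>
definition cp_divide :: "('v \<Rightarrow> int) \<times> int \<Rightarrow> int \<Rightarrow> ('v \<Rightarrow> int) \<times> int" where
  "cp_divide D m =
     (let c = fst D; d = snd D; NV = {x. c x < 0} in
       ((\<lambda>x. sgn (c x) * cdiv \<bar>c x\<bar> m),
        cdiv (d + (\<Sum>x\<in>NV. - c x)) m - (\<Sum>x\<in>NV. cdiv (- c x) m)))"

inductive cp_deriv :: "'v pbc set \<Rightarrow> ('v \<Rightarrow> int) \<times> int \<Rightarrow> bool" for H where
  axiom: "C \<in> H \<Longrightarrow> cp_deriv H (canon C)"
| lit_pos: "cp_deriv H (canon ({#(1, Pos x)#}, 0))"
| lit_neg: "cp_deriv H (canon ({#(1, Neg x)#}, 0))"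
| add: "cp_deriv H (c1, d1) \<Longrightarrow> cp_deriv H (c2, d2) \<Longrightarrow> cp_deriv H ((\<lambda>x. c1 x + c2 x), d1 + d2)"
| mult: "cp_deriv H (c, d) \<Longrightarrow> (m::int) > 0 \<Longrightarrow> cp_deriv H ((\<lambda>x. m * c x), m * d)"
| divide: "cp_deriv H D \<Longrightarrow> (m::int) > 0 \<Longrightarrow> cp_deriv H (cp_divide D m)"

definition contradiction :: "'v pbc" where
  "contradiction = ({#}, 1)"

definition implies :: "'v pbc set \<Rightarrow> 'v pbc \<Rightarrow> bool" where
  "implies H D \<longleftrightarrow> cp_deriv H (canon D) \<or> cp_deriv (insert (pbc_neg D) H) (canon contradiction)"

definition implies_set :: "'v pbc set \<Rightarrow> 'v pbc set \<Rightarrow> bool" where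
  "implies_set H S \<longleftrightarrow> (\<forall>D\<in>S. implies H D)"

definition FG :: "'v set \<Rightarrow> ('v \<times> 'v) set \<Rightarrow> 'v pbc set" where
  "FG V E = {({#(1, Neg a), (1, Neg b)#}, 1) | a b. a \<in> V \<and> b \<in> V \<and> a \<noteq> b \<and> (a, b) \<notin> E}"

definition obj :: "'v set \<Rightarrow> (int \<times> 'v lit) multiset" where
  "obj V = image_mset (\<lambda>w. (1, Neg w)) (mset_set V)"

datatype ext_int = Fin int | PInf

text \<open>The constraint \<open>f \<le> k - 1\<close>, i.e. \<open>\<Sum> -w\<bar> \<ge> 1 - k\<close>; for \<open>k = \<infinity>\<close> the trivially
  true constraint \<open>0 \<ge> 0\<close>.\<close>
fun obj_bound :: "'v set \<Rightarrow> ext_int \<Rightarrow> 'v pbc" where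
  "obj_bound V (Fin k) = (terms_neg (obj V), 1 - k)"
| "obj_bound V PInf = ({#}, 0)"

text \<open>\<open>f|\<omega> \<le> f\<close>, i.e. \<open>f - f|\<omega> \<ge> 0\<close>.\<close>
definition obj_improve :: "('v \<Rightarrow> 'v lit) \<Rightarrow> 'v set \<Rightarrow> 'v pbc" where
  "obj_improve \<omega> V = (obj V + terms_neg (terms_subst \<omega> (obj V)), 0)"

text \<open>\<open>O_lex(z|\<alpha>, z|\<beta>)\<close> = \<open>\<Sum>i=1..N 2^(N-i) (\<beta>(z_i) - \<alpha>(z_i)) \<ge> 0\<close>
  (list index \<open>j = i - 1\<close>); the identity substitution is \<open>Pos\<close>.\<close>
definition olex :: "'v list \<Rightarrow> ('v \<Rightarrow> 'v lit) \<Rightarrow> ('v \<Rightarrow> 'v lit) \<Rightarrow> 'v pbc" where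
  "olex zs \<alpha> \<beta> =
     (mset (map (\<lambda>j. ((2::int) ^ (length zs - Suc j), \<beta> (zs ! j))) [0..<length zs])
      + mset (map (\<lambda>j. (- ((2::int) ^ (length zs - Suc j)), \<alpha> (zs ! j))) [0..<length zs]),
      0)"

definition swap :: "'v \<Rightarrow> 'v \<Rightarrow> 'v \<Rightarrow> 'v lit" where
  "swap u v = (\<lambda>x. if x = u then Pos v else if x = v then Pos u else Pos x)"

definition nbhd :: "('v \<times> 'v) set \<Rightarrow> 'v \<Rightarrow> 'v set" where
  "nbhd E w = {w'. (w, w') \<in> E}"

definition dominates :: "('v \<times> 'v) set \<Rightarrow> 'v \<Rightarrow> 'v \<Rightarrow> bool" where
  "dominates E a b \<longleftrightarrow> a \<noteq> b \<and> nbhd E b - {a} \<subseteq> nbhd E a - {b}"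

end

theory Submission
  imports Defs
begin
definition sw :: "'v \<Rightarrow> 'v \<Rightarrow> 'v \<Rightarrow> 'v" where
  "sw u v x = (if x = u then v else if x = v then u else x)"
lemma swap_sw: "swap u v = (\<lambda>x. Pos (sw u v x))" by (simp add: swap_def sw_def fun_eq_iff)

lemma sum_mset_map: "sum_mset (image_mset g (mset xs)) = sum_list (map g xs)"
  by (induction xs) auto

lemma olex_canon:
  "canon (olex zs (\<lambda>y. Pos (a y)) (\<lambda>y. Pos (b y))) =
    ((\<lambda>x. (\<Sum>j<length zs. if b (zs!j) = x then (2::int)^(length zs - Suc j) else 0)
        + (\<Sum>j<length zs. if a (zs!j) = x then - ((2::int)^(length zs - Suc j)) else 0)), 0)"
  unfolding canon_def olex_def
  apply (simp only: fst_conv snd_conv image_mset_union sum_mset.union sum_mset_map map_map o_def)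
  apply (simp add: sum_list_addf flip: sum_set_upt_conv_sum_list_nat add: atLeast0LessThan sum_negf)
  done

lemma sum_neg_if: "(\<Sum>j<n. if P j then - (f j) else 0) = - (\<Sum>j<n. if P j then (f j::int) else 0)"
  by (simp add: sum_negf[symmetric] if_distrib cong: if_cong)

lemma sum_pick:
  assumes "distinct zs" "i < length zs"
  shows "(\<Sum>j<length zs. if zs!j = zs!i then (f j::int) else 0) = f i"
proof -
  have "(\<Sum>j<length zs. if zs!j = zs!i then f j else 0) = (\<Sum>j<length zs. if j = i then f j else 0)"
    using assms by (intro sum.cong) (auto simp: nth_eq_iff_index_eq)
  also have "\<dots> = f i" using assms by simp
  finally show ?thesis .
qed

lemma add_eq: "cp_deriv H (c1,d1) \<Longrightarrow> cp_deriv H (c2,d2) \<Longrightarrow> (\<And>x. c x = c1 x + c2 x) \<Longrightarrow> d = d1 + d2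
  \<Longrightarrow> cp_deriv H (c,d)"
  using cp_deriv.add[of H c1 d1 c2 d2] by (metis ext)

lemma mult_eq: "cp_deriv H (c1,d1) \<Longrightarrow> m > 0 \<Longrightarrow> (\<And>x. c x = m * c1 x) \<Longrightarrow> d = m * d1
  \<Longrightarrow> cp_deriv H (c,d)"
  using cp_deriv.mult[of H c1 d1 m] by (metis ext)

lemma cp_eq: "cp_deriv H (c1,d1) \<Longrightarrow> (\<And>x. c x = c1 x) \<Longrightarrow> d = d1 \<Longrightarrow> cp_deriv H (c,d)"
  by (metis ext)

lemma canon_pos: "canon ({#(1, Pos x)#}, 0) = (\<lambda>y. if x = y then 1 else 0, 0)"
  by (simp add: canon_def)
lemma canon_neg: "canon ({#(1, Neg x)#}, 0) = (\<lambda>y. if x = y then -1 else 0, -1)"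
  by (simp add: canon_def)

lemma d_pos: "cp_deriv H (\<lambda>y. if x = y then 1 else 0, 0)"
  using cp_deriv.lit_pos[of H x] by (simp add: canon_pos)
lemma d_neg: "cp_deriv H (\<lambda>y. if x = y then -1 else 0, -1)"
  using cp_deriv.lit_neg[of H x] by (simp add: canon_neg)

lemma weaken:
  assumes "cp_deriv H (c,d)" "d' \<le> d"
  shows "cp_deriv H (c,d')"
proof (cases "d' = d")
  case True then show ?thesis using assms by simp
next
  case False
  then have m: "d - d' > 0" using assms by simp
  have "cp_deriv H (\<lambda>y. 0, - (d - d'))"
    by (rule add_eq[OF mult_eq[OF d_pos[of H undefined] m] mult_eq[OF d_neg[of H undefined] m]]) auto
  then show ?thesis by (rule add_eq[OF assms(1)]) auto
qed

context
  fixes H :: "'v pbc set" and u v :: 'v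
  assumes nCH: "pbc_neg ({#(1, Pos u), (1, Neg v)#}, 1) \<in> H"
begin

lemma nC: "cp_deriv H (\<lambda>y. (if u=y then -1 else 0) + (if v=y then 1 else 0), 1)"
  using cp_deriv.axiom[OF nCH] by (simp add: canon_def pbc_neg_def) (erule cp_eq; simp)

lemma negu: "cp_deriv H (\<lambda>y. if u = y then -1 else 0, 0)"
  by (rule add_eq[OF nC d_neg[of H v]]) auto

lemma zero: "cp_deriv H (\<lambda>y. 0, 0)"
  by (rule add_eq[OF add_eq[OF nC d_neg[of H v]] d_pos[of H u]]) auto

end

lemma tc_neg: "term_coef x (- a, l) = - term_coef x (a, l)" by (cases l) auto
lemma tk_neg: "term_const (- a, l) = - term_const (a, l)" by (cases l) auto

lemma canon_cancel: "canon (T + terms_neg T, 0) = (\<lambda>x. 0, 0)"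
proof -
  have 1: "sum_mset (image_mset (term_coef x) (terms_neg T)) = - sum_mset (image_mset (term_coef x) T)" for x
    by (induction T) (auto simp: terms_neg_def tc_neg split: prod.splits)
  have 2: "sum_mset (image_mset term_const (terms_neg T)) = - sum_mset (image_mset term_const T)"
    by (induction T) (auto simp: terms_neg_def tk_neg split: prod.splits)
  show ?thesis by (simp add: canon_def 1 2)
qed

lemma sw_inv: "sw u v (sw u v x) = x" by (auto simp: sw_def)

lemma subst_obj:
  assumes "u \<in> V" "v \<in> V"
  shows "terms_subst (swap u v) (obj V) = obj V"
proof -
  have inj: "inj_on (sw u v) V" by (metis inj_onI sw_inv)
  have im: "sw u v ` V = V" using assms by (auto simp: sw_def image_iff)
  have "terms_subst (swap u v) (obj V) = image_mset (\<lambda>w. (1, Neg w)) (image_mset (sw u v) (mset_set V))"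
    by (simp add: terms_subst_def obj_def swap_sw multiset.map_comp o_def)
  also have "image_mset (sw u v) (mset_set V) = mset_set V"
    using image_mset_mset_set[OF inj] im by simp
  finally show ?thesis by (simp add: obj_def)
qed

definition FF :: "'v list \<Rightarrow> 'v \<Rightarrow> int" where
  "FF zs y = (\<Sum>j<length zs. if zs!j = y then (2::int)^(length zs - Suc j) else 0)"

lemma sw_eq: "(sw u v y = x) = (y = sw u v x)" by (auto simp: sw_def)

lemma olex1: "canon (olex zs (swap u v) Pos) = (\<lambda>x. FF zs x - FF zs (sw u v x), 0)"
  using olex_canon[of zs "sw u v" "\<lambda>y. y"]
  by (simp add: swap_sw sum_neg_if sw_eq FF_def)

lemma olex2: "canon (olex zs Pos (swap u v)) = (\<lambda>x. FF zs (sw u v x) - FF zs x, 0)"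
  using olex_canon[of zs "\<lambda>y. y" "sw u v"]
  by (simp add: swap_sw sum_neg_if sw_eq FF_def)

lemma FF_nth: "distinct zs \<Longrightarrow> i < length zs \<Longrightarrow> FF zs (zs!i) = 2^(length zs - Suc i)"
  unfolding FF_def by (rule sum_pick)


lemma dom_case:
  assumes "sym E" "dominates E u v" "a \<noteq> b" "(a,b) \<notin> E" "(sw u v a, sw u v b) \<in> E"
  shows "sw u v a = u \<or> sw u v b = u"
proof (rule ccontr)
  assume n: "\<not> (sw u v a = u \<or> sw u v b = u)"
  have uv0: "u \<noteq> v" using assms(2) unfolding dominates_def by auto
  with n have av: "a \<noteq> v" "b \<noteq> v" by (auto simp: sw_def)
  have uv: "u \<noteq> v" and sub: "\<And>w. (v,w) \<in> E \<Longrightarrow> w \<noteq> u \<Longrightarrow> (u,w) \<in> E"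
    using assms(2) unfolding dominates_def nbhd_def by auto
  show False
  proof (cases "a = u")
    case True
    then have "b \<noteq> u" using assms(3) by simp
    then have "(v, b) \<in> E" using assms(5) True av uv by (simp add: sw_def)
    then show False using sub[of b] \<open>b \<noteq> u\<close> True assms(4) by simp
  next
    case aU: False
    show False
    proof (cases "b = u")
      case True
      then have "(a, v) \<in> E" using assms(5) aU av uv by (simp add: sw_def)
      then have "(v, a) \<in> E" using assms(1) by (meson symD)
      then have "(u, a) \<in> E" using sub[of a] aU by simp
      then show False using True assms(1,4) by (meson symD)
    next
      case False
      then show False using assms(4,5) aU av by (simp add: sw_def)
    qed
  qed
qed

theorem mainTheorem13:
  fixes V :: "'v set" and E :: "('v \<times> 'v) set" and u v :: 'v and zs :: "'v list"
    and \<D> :: "'v pbc set" and k :: ext_int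
  assumes "finite V" and "E \<subseteq> V \<times> V" and "sym E" and "\<forall>x. (x, x) \<notin> E"
    and "u \<in> V" and "v \<in> V" and "u \<noteq> v" and "dominates E u v"
    and "distinct zs" and "set zs = V"
    and "\<exists>i j. i < j \<and> j < length zs \<and> zs ! i = v \<and> zs ! j = u"
  shows "implies_set (FG V E \<union> \<D> \<union> {obj_bound V k} \<union> {pbc_neg ({#(1, Pos u), (1, Neg v)#}, 1)})
           (pbc_subst (swap u v) ` FG V E \<union> {olex zs (swap u v) Pos} \<union> {obj_improve (swap u v) V})
       \<and> implies (FG V E \<union> \<D> \<union> {obj_bound V k} \<union> {pbc_neg ({#(1, Pos u), (1, Neg v)#}, 1)}
                   \<union> {olex zs Pos (swap u v)})
           contradiction"
proof -
  let ?nC = "pbc_neg ({#(1, Pos u), (1, Neg v)#}, (1::int))"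
  let ?H = "FG V E \<union> \<D> \<union> {obj_bound V k} \<union> {?nC}"
  let ?H2 = "?H \<union> {olex zs Pos (swap u v)}"
  have inH: "?nC \<in> ?H" by simp
  have inH2: "?nC \<in> ?H2" by simp
  obtain p q where pq: "p < q" "q < length zs" "zs ! p = v" "zs ! q = u" using assms(11) by blast
  define c :: int where "c = 2^(length zs - Suc p) - 2^(length zs - Suc q)"
  have "(2::int)^(length zs - Suc q) < 2^(length zs - Suc p)"
    by (rule power_strict_increasing) (use pq in auto)
  then have cpos: "c > 0" by (simp add: c_def)
  have Fv: "FF zs v = 2^(length zs - Suc p)" using FF_nth[OF assms(9), of p] pq by simp
  have Fu: "FF zs u = 2^(length zs - Suc q)" using FF_nth[OF assms(9), of q] pq by simp
  have swu: "sw u v u = v" and swv: "sw u v v = u" using assms(7) by (auto simp: sw_def)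
  have swo: "x \<noteq> u \<Longrightarrow> x \<noteq> v \<Longrightarrow> sw u v x = x" for x by (simp add: sw_def)
  have coef: "FF zs x - FF zs (sw u v x) = c * ((if v = x then 1 else 0) - (if u = x then 1 else 0))" for x
    using assms(7) by (cases "x = u"; cases "x = v") (auto simp: Fu Fv swu swv swo c_def)
  have coef2: "FF zs (sw u v x) - FF zs x = c * ((if u = x then 1 else 0) - (if v = x then 1 else 0))" for x
    using coef[of x] by (simp add: algebra_simps)
  have A: "implies ?H D" if D: "D \<in> pbc_subst (swap u v) ` FG V E" for D
  proof -
    obtain a b where ab: "a \<in> V" "b \<in> V" "a \<noteq> b" "(a,b) \<notin> E"
      and Deq: "D = ({#(1, Neg (sw u v a)), (1, Neg (sw u v b))#}, 1)"
      using D by (auto simp: FG_def pbc_subst_def terms_subst_def swap_sw)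
    show ?thesis
    proof (cases "(sw u v a, sw u v b) \<in> E")
      case False
      have "sw u v a \<in> V" "sw u v b \<in> V" using ab assms(5,6) by (auto simp: sw_def)
      moreover have "sw u v a \<noteq> sw u v b" using ab(3) by (metis sw_inv)
      ultimately have "D \<in> FG V E" using False Deq unfolding FG_def by blast
      then show ?thesis unfolding implies_def by (blast intro: cp_deriv.axiom)
    next
      case True
      then have "sw u v a = u \<or> sw u v b = u" using dom_case[OF assms(3,8) ab(3,4)] by blast
      then obtain w where Dw: "D = ({#(1, Neg u), (1, Neg w)#}, 1)" using Deq
        by (auto simp: add_mset_commute)
      have "cp_deriv ?H (\<lambda>y. (if u = y then -1 else 0) + (if w = y then -1 else 0), -1)"
        by (rule add_eq[OF negu[OF inH] d_neg[of _ w]]) auto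
      then have "cp_deriv ?H (canon D)" by (simp add: Dw canon_def)
      then show ?thesis unfolding implies_def by blast
    qed
  qed
  have B: "implies ?H (olex zs (swap u v) Pos)"
  proof -
    have "cp_deriv ?H (\<lambda>x. FF zs x - FF zs (sw u v x), 0)"
      by (rule add_eq[OF add_eq[OF mult_eq[OF nC[OF inH] cpos] mult_eq[OF d_pos[of _ u] cpos]]
            mult_eq[OF d_neg[of _ u] cpos]]) (simp_all only: coef, simp_all add: algebra_simps)
    then show ?thesis unfolding implies_def olex1 by blast
  qed
  have C: "implies ?H (obj_improve (swap u v) V)"
    unfolding implies_def obj_improve_def subst_obj[OF assms(5,6)] canon_cancel
    using zero[OF inH] by blast
  have Dc: "implies ?H2 contradiction"
  proof -
    have ol: "cp_deriv ?H2 (\<lambda>x. FF zs (sw u v x) - FF zs x, 0)"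
      using cp_deriv.axiom[of "olex zs Pos (swap u v)" ?H2] by (simp add: olex2)
    have "cp_deriv ?H2 (\<lambda>x. 0, c)"
      by (rule add_eq[OF ol mult_eq[OF nC[OF inH2] cpos]]) (simp_all only: coef2, simp_all add: algebra_simps)
    then have "cp_deriv ?H2 (\<lambda>x. 0, 1)" by (rule weaken) (use cpos in simp)
    then show ?thesis unfolding implies_def contradiction_def canon_def by simp
  qed
  show ?thesis using A B C Dc unfolding implies_set_def by blast
qed

end
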